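(* For $k,\ell\in\mathbb Z_{\ge0}$ and $s\in\mathbb C$: $p_+^{(k,\ell)}(t)=\sum_{m=0}^{\ell}k^{\underline m}P_m^{(\ell-m,-m)}(0)t^m$ if $k\ge\ell$, and $=\sum_{m=0}^{k}\ell^{\underline m}P_m^{(k-m,-m)}(0)t^m$ if $k<\ell$; $p_-^{(k,\ell)}(t)=\sum_{m=0}^{\ell}k^{\underline m}P_m^{(-m,\ell-m)}(0)t^m$ if $k\ge\ell$, and $=\sum_{m=0}^{k}\ell^{\underline m}P_m^{(-m,k-m)}(0)t^m$ if $k<\ell$; $p_c^{(s;k)}(t)=\sum_{m=0}^kk^{\underline m}P_m^{(\frac{k+s-2m}2,\frac{k-s-2m}2)}(0)t^m$. In particular $p_c^{(\pm k;k)}(t)=p_\pm^{(k,k)}(t)$.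
   Context: $r^{\underline m}=r(r-1)\cdots(r-m+1)$, $r^{\overline m}=r(r+1)\cdots(r+m-1)$ (empty products $=1$). For complex $a$ and $m\in\mathbb Z_{\ge0}$, $\binom am=a(a-1)\cdots(a-m+1)/m!$. Jacobi polynomials: $P_m^{(\alpha,\beta)}(z)=\sum_{j=0}^m\binom{m+\alpha}{m-j}\binom{m+\beta}{j}\big(\frac{z-1}2\big)^j\big(\frac{z+1}2\big)^{m-j}$ for $\alpha,\beta\in\mathbb C$. Cayley continuants $\mathrm{Cay}_m(x;y)=\sum_{j=0}^m\binom mj(\frac{x+y}2)^{\underline j}(\frac{x-y}2)^{\overline{m-j}}$ (the tridiagonal $m\times m$ determinant with diagonal $x$, superdiagonal $1,\dots,m-1$, subdiagonal $y,y-1,\dots,y-m+2$). Polynomials: $p_\pm^{(k,\ell)}(t)=\sum_{m=0}^{\min(k,\ell)}\frac{(\pm1)^m}{2^m}m!\binom km\binom\ell mt^m$, $p_c^{(s;k)}(t)=\sum_{m=0}^k\frac1{2^m}\binom km\mathrm{Cay}_m(s;k)t^m$. *)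

theory Defs
  imports Complex_Main
begin

definition ffall :: "complex \<Rightarrow> nat \<Rightarrow> complex" where
  "ffall r m = (\<Prod>i<m. r - of_nat i)"

definition rfact :: "complex \<Rightarrow> nat \<Rightarrow> complex" where
  "rfact r m = (\<Prod>i<m. r + of_nat i)"

definition jacobiP :: "nat \<Rightarrow> complex \<Rightarrow> complex \<Rightarrow> complex \<Rightarrow> complex" where
  "jacobiP m \<alpha> \<beta> z = (\<Sum>j=0..m. ((of_nat m + \<alpha>) gchoose (m - j)) * ((of_nat m + \<beta>) gchoose j)
      * ((z - 1) / 2) ^ j * ((z + 1) / 2) ^ (m - j))"

definition cay :: "nat \<Rightarrow> complex \<Rightarrow> complex \<Rightarrow> complex" where
  "cay m x y = (\<Sum>j=0..m. of_nat (m choose j) * ffall ((x + y) / 2) j * rfact ((x - y) / 2) (m - j))"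

definition p_plus :: "nat \<Rightarrow> nat \<Rightarrow> complex \<Rightarrow> complex" where
  "p_plus k l t = (\<Sum>m=0..min k l. (1 / 2 ^ m) * of_nat (fact m) * of_nat (k choose m) * of_nat (l choose m) * t ^ m)"

definition p_minus :: "nat \<Rightarrow> nat \<Rightarrow> complex \<Rightarrow> complex" where
  "p_minus k l t = (\<Sum>m=0..min k l. ((-1) ^ m / 2 ^ m) * of_nat (fact m) * of_nat (k choose m) * of_nat (l choose m) * t ^ m)"

definition p_c :: "complex \<Rightarrow> nat \<Rightarrow> complex \<Rightarrow> complex" where
  "p_c s k t = (\<Sum>m=0..k. (1 / 2 ^ m) * of_nat (k choose m) * cay m s (of_nat k) * t ^ m)"

end

theory Submission
  imports Defs
begin

lemma ffall_gchoose: "ffall a m = fact m * (a gchoose m)"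
  by (simp add: ffall_def gbinomial_mult_fact atLeast0LessThan)

lemma rfact_neg: "rfact (- b) m = (-1)^m * ffall b m"
proof -
  have "rfact (- b) m = (\<Prod>i<m. - (b - of_nat i))" unfolding rfact_def by (simp add: algebra_simps)
  also have "\<dots> = (-1)^m * ffall b m" unfolding ffall_def by (subst prod_uminus) simp
  finally show ?thesis .
qed

lemma jacobi0: "jacobiP m \<alpha> \<beta> 0 = (1/2^m) * (\<Sum>j=0..m. (-1)^j * ((of_nat m + \<alpha>) gchoose (m - j)) * ((of_nat m + \<beta>) gchoose j))"
  unfolding jacobiP_def sum_distrib_left
proof (rule sum.cong[OF refl])
  fix j assume "j \<in> {0..m}"
  hence "m = j + (m - j)" by simp
  hence e: "(2::complex)^m = 2^j * 2^(m-j)" by (metis power_add)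
  show "((of_nat m + \<alpha>) gchoose (m - j)) * ((of_nat m + \<beta>) gchoose j) * ((0 - 1) / 2) ^ j * ((0 + 1) / 2) ^ (m - j)
     = 1 / 2 ^ m * ((-1)^j * ((of_nat m + \<alpha>) gchoose (m - j)) * ((of_nat m + \<beta>) gchoose j))"
  proof -
    have h0: "((0 - 1) / 2 :: complex) = (-1) / 2" by simp
    have h: "((0 - 1) / 2 :: complex) ^ j = (-1)^j / 2^j" by (simp only: h0 power_divide)
    show ?thesis unfolding h by (simp add: e power_divide field_simps)
  qed
qed

lemma jac_plus: "m \<le> l \<Longrightarrow> jacobiP m (of_nat l - of_nat m) (- of_nat m) 0 = of_nat (l choose m) / 2^m"
proof -
  assume "m \<le> l"
  have "(\<Sum>j=0..m. (-1)^j * ((of_nat m + (of_nat l - of_nat m)) gchoose (m - j)) * ((of_nat m + (- of_nat m)) gchoose j))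
     = (\<Sum>j=0..m. if j = 0 then (of_nat l gchoose m) else (0::complex))"
    by (rule sum.cong) (auto simp: gbinomial_0_left)
  also have "\<dots> = of_nat (l choose m)" by (simp add: binomial_gbinomial)
  finally show ?thesis by (simp add: jacobi0)
qed

lemma jac_minus: "m \<le> l \<Longrightarrow> jacobiP m (- of_nat m) (of_nat l - of_nat m) 0 = (-1)^m * of_nat (l choose m) / 2^m"
proof -
  assume "m \<le> l"
  have "(\<Sum>j=0..m. (-1)^j * ((of_nat m + (- of_nat m)) gchoose (m - j)) * ((of_nat m + (of_nat l - of_nat m)) gchoose j))
     = (\<Sum>j=0..m. if j = m then (-1)^m * (of_nat l gchoose m) else (0::complex))"
    by (rule sum.cong) (auto simp: gbinomial_0_left)
  also have "\<dots> = (-1)^m * of_nat (l choose m)" by (simp add: binomial_gbinomial)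
  finally show ?thesis by (simp add: jacobi0)
qed

lemma ffall_nat: "ffall (of_nat k) m = of_nat (fact m) * of_nat (k choose m)"
  by (simp add: ffall_gchoose binomial_gbinomial)

lemma part_plus: "k \<ge> l \<Longrightarrow> p_plus k l t =
  (\<Sum>m=0..l. ffall (of_nat k) m * jacobiP m (of_nat l - of_nat m) (- of_nat m) 0 * t ^ m)"
  unfolding p_plus_def
  by (rule sum.cong) (auto simp: min_def jac_plus ffall_nat)

lemma part_minus: "k \<ge> l \<Longrightarrow> p_minus k l t =
  (\<Sum>m=0..l. ffall (of_nat k) m * jacobiP m (- of_nat m) (of_nat l - of_nat m) 0 * t ^ m)"
  unfolding p_minus_def
  by (rule sum.cong) (auto simp: min_def jac_minus ffall_nat)

lemma pp_sym: "p_plus k l t = p_plus l k t"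
  unfolding p_plus_def by (simp add: min.commute mult_ac)
lemma pm_sym: "p_minus k l t = p_minus l k t"
  unfolding p_minus_def by (simp add: min.commute mult_ac)

lemma cay_jac: "cay m s (of_nat k) = 2^m * fact m *
   jacobiP m ((of_nat k + s - 2 * of_nat m) / 2) ((of_nat k - s - 2 * of_nat m) / 2) 0"
proof -
  define a where "a = (s + of_nat k) / 2"
  define b where "b = (of_nat k - s) / 2"
  have ea: "of_nat m + (of_nat k + s - 2 * of_nat m) / 2 = a" unfolding a_def by (simp add: field_simps)
  have eb: "of_nat m + (of_nat k - s - 2 * of_nat m) / 2 = b" unfolding b_def by (simp add: field_simps)
  have ec: "(s - of_nat k) / 2 = - b" unfolding b_def by (simp add: field_simps)
  have "cay m s (of_nat k) = (\<Sum>j=0..m. fact m * ((-1)^(m-j) * (a gchoose j) * (b gchoose (m-j))))"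
    unfolding cay_def a_def[symmetric] ec rfact_neg
  proof (rule sum.cong[OF refl])
    fix j assume "j \<in> {0..m}"
    hence "j \<le> m" by simp
    hence f: "fact j * fact (m - j) * of_nat (m choose j) = (fact m :: complex)"
      by (metis binomial_fact_lemma of_nat_fact of_nat_mult)
    show "of_nat (m choose j) * ffall a j * ((- 1) ^ (m - j) * ffall b (m - j)) =
         fact m * ((-1)^(m-j) * (a gchoose j) * (b gchoose (m-j)))"
      by (simp add: ffall_gchoose f[symmetric] mult_ac)
  qed
  also have "\<dots> = fact m * (\<Sum>j=0..m. (-1)^j * (a gchoose (m - j)) * (b gchoose j))"
    by (subst sum.atLeastAtMost_rev) (simp add: sum_distrib_left mult_ac)
  finally show ?thesis by (simp add: jacobi0 ea eb)
qed

lemma part_c: "p_c s k t = (\<Sum>m=0..k. ffall (of_nat k) m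
          * jacobiP m ((of_nat k + s - 2 * of_nat m) / 2) ((of_nat k - s - 2 * of_nat m) / 2) 0 * t ^ m)"
  unfolding p_c_def cay_jac
  by (rule sum.cong) (auto simp: ffall_nat)

theorem theorem7p1:
  fixes k l :: nat and s t :: complex
  shows
   "p_plus k l t =
      (if k \<ge> l
       then (\<Sum>m=0..l. ffall (of_nat k) m * jacobiP m (of_nat l - of_nat m) (- of_nat m) 0 * t ^ m)
       else (\<Sum>m=0..k. ffall (of_nat l) m * jacobiP m (of_nat k - of_nat m) (- of_nat m) 0 * t ^ m))
    \<and> p_minus k l t =
      (if k \<ge> l
       then (\<Sum>m=0..l. ffall (of_nat k) m * jacobiP m (- of_nat m) (of_nat l - of_nat m) 0 * t ^ m)
       else (\<Sum>m=0..k. ffall (of_nat l) m * jacobiP m (- of_nat m) (of_nat k - of_nat m) 0 * t ^ m))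
    \<and> p_c s k t =
      (\<Sum>m=0..k. ffall (of_nat k) m
          * jacobiP m ((of_nat k + s - 2 * of_nat m) / 2) ((of_nat k - s - 2 * of_nat m) / 2) 0 * t ^ m)
    \<and> p_c (of_nat k) k t = p_plus k k t
    \<and> p_c (- of_nat k) k t = p_minus k k t"
proof -
  have 1: "p_plus k l t = (if k \<ge> l
       then (\<Sum>m=0..l. ffall (of_nat k) m * jacobiP m (of_nat l - of_nat m) (- of_nat m) 0 * t ^ m)
       else (\<Sum>m=0..k. ffall (of_nat l) m * jacobiP m (of_nat k - of_nat m) (- of_nat m) 0 * t ^ m))"
    using part_plus[of l k t] part_plus[of k l t] pp_sym[of k l t] by auto
  have 2: "p_minus k l t = (if k \<ge> l
       then (\<Sum>m=0..l. ffall (of_nat k) m * jacobiP m (- of_nat m) (of_nat l - of_nat m) 0 * t ^ m)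
       else (\<Sum>m=0..k. ffall (of_nat l) m * jacobiP m (- of_nat m) (of_nat k - of_nat m) 0 * t ^ m))"
    using part_minus[of l k t] part_minus[of k l t] pm_sym[of k l t] by auto
  have 4: "p_c (of_nat k) k t = p_plus k k t"
    unfolding part_c part_plus[OF order_refl]
  proof (rule sum.cong[OF refl])
    fix m
    have a: "(of_nat k + of_nat k - 2 * of_nat m) / 2 = (of_nat k - of_nat m :: complex)" by (simp add: field_simps)
    have b: "(of_nat k - of_nat k - 2 * of_nat m) / 2 = (- of_nat m :: complex)" by (simp add: field_simps)
    show "ffall (of_nat k) m * jacobiP m ((of_nat k + of_nat k - 2 * of_nat m) / 2) ((of_nat k - of_nat k - 2 * of_nat m) / 2) 0 * t ^ m
      = ffall (of_nat k) m * jacobiP m (of_nat k - of_nat m) (- of_nat m) 0 * t ^ m" by (simp only: a b)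
  qed
  have 5: "p_c (- of_nat k) k t = p_minus k k t"
    unfolding part_c part_minus[OF order_refl]
  proof (rule sum.cong[OF refl])
    fix m
    have a: "(of_nat k + - of_nat k - 2 * of_nat m) / 2 = (- of_nat m :: complex)" by (simp add: field_simps)
    have b: "(of_nat k - - of_nat k - 2 * of_nat m) / 2 = (of_nat k - of_nat m :: complex)" by (simp add: field_simps)
    show "ffall (of_nat k) m * jacobiP m ((of_nat k + - of_nat k - 2 * of_nat m) / 2) ((of_nat k - - of_nat k - 2 * of_nat m) / 2) 0 * t ^ m
      = ffall (of_nat k) m * jacobiP m (- of_nat m) (of_nat k - of_nat m) 0 * t ^ m" by (simp only: a b)
  qed
  show ?thesis using 1 2 4 5 part_c by blast
qed

end
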